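(* Let $M$ be a loopless matroid of rank $r$ on ground set $S$, and let $S=S_1\cup\dots\cup S_r$ be a partition of $S$ into $r$ color classes. The following are equivalent: (i) $S_i$ is a cut of the restriction $M|(S_1\cup\dots\cup S_i)$ for $i=1,\dots,r$; (ii) the coloring is rainbow circuit-free and $r_M(S_1\cup\dots\cup S_i)=i$ for $i=1,\dots,r$; (iii) each $S_i$ is non-empty and $S_1\cup\dots\cup S_i$ is closed in $M$ for $i=1,\dots,r$.
   Context: A cut of a matroid is an inclusionwise minimal subset of the ground set intersecting every basis. A coloring is rainbow circuit-free if no circuit of $M$ has all its elements of pairwise different colors. A set $X\subseteq S$ is closed (a flat) if $r_M(X+e)>r_M(X)$ for every $e\in S-X$. *)

theory Defs
  imports Main
begin

definition matroid :: "'a set \<Rightarrow> ('a set \<Rightarrow> bool) \<Rightarrow> bool" where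
  "matroid S indep \<longleftrightarrow>
     finite S \<and>
     (\<forall>I. indep I \<longrightarrow> I \<subseteq> S) \<and>
     indep {} \<and>
     (\<forall>I J. indep J \<and> I \<subseteq> J \<longrightarrow> indep I) \<and>
     (\<forall>I J. indep I \<and> indep J \<and> card I < card J \<longrightarrow> (\<exists>x\<in>J - I. indep (insert x I)))"

definition rk :: "('a set \<Rightarrow> bool) \<Rightarrow> 'a set \<Rightarrow> nat" where
  "rk indep X = Max {card I | I. I \<subseteq> X \<and> indep I}"

definition loopless :: "'a set \<Rightarrow> ('a set \<Rightarrow> bool) \<Rightarrow> bool" where
  "loopless S indep \<longleftrightarrow> (\<forall>x\<in>S. indep {x})"

definition circuit :: "'a set \<Rightarrow> ('a set \<Rightarrow> bool) \<Rightarrow> 'a set \<Rightarrow> bool" where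
  "circuit S indep C \<longleftrightarrow> C \<subseteq> S \<and> \<not> indep C \<and> (\<forall>x\<in>C. indep (C - {x}))"

text \<open>Bases of the restriction M|T (independent sets of M|T are the independent sets of M inside T).\<close>
definition basis_restr :: "('a set \<Rightarrow> bool) \<Rightarrow> 'a set \<Rightarrow> 'a set \<Rightarrow> bool" where
  "basis_restr indep T B \<longleftrightarrow> B \<subseteq> T \<and> indep B \<and> (\<forall>x\<in>T - B. \<not> indep (insert x B))"

definition is_cut_restr :: "('a set \<Rightarrow> bool) \<Rightarrow> 'a set \<Rightarrow> 'a set \<Rightarrow> bool" where
  "is_cut_restr indep T X \<longleftrightarrow>
     X \<subseteq> T \<and> (\<forall>B. basis_restr indep T B \<longrightarrow> X \<inter> B \<noteq> {}) \<and>
     (\<forall>Y. Y \<subset> X \<longrightarrow> (\<exists>B. basis_restr indep T B \<and> Y \<inter> B = {}))"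

definition closed_set :: "'a set \<Rightarrow> ('a set \<Rightarrow> bool) \<Rightarrow> 'a set \<Rightarrow> bool" where
  "closed_set S indep X \<longleftrightarrow> X \<subseteq> S \<and> (\<forall>e\<in>S - X. rk indep (insert e X) > rk indep X)"

definition rainbow_circuit_free ::
  "'a set \<Rightarrow> ('a set \<Rightarrow> bool) \<Rightarrow> nat \<Rightarrow> (nat \<Rightarrow> 'a set) \<Rightarrow> bool" where
  "rainbow_circuit_free S indep r Sc \<longleftrightarrow>
     \<not> (\<exists>C. circuit S indep C \<and> (\<forall>i\<in>{1..r}. card (C \<inter> Sc i) \<le> 1))"

end

theory Submission
  imports Defs
begin


locale mat = fixes S :: "'a set" and indep :: "'a set \<Rightarrow> bool"
  assumes M: "matroid S indep"
begin

lemma finS: "finite S" using M unfolding matroid_def by blast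
lemma indep_sub: "indep I \<Longrightarrow> I \<subseteq> S" using M unfolding matroid_def by blast
lemma indep_fin: "indep I \<Longrightarrow> finite I" using indep_sub finS finite_subset by blast
lemma indep_empty: "indep {}" using M unfolding matroid_def by blast
lemma indep_mono: "indep J \<Longrightarrow> I \<subseteq> J \<Longrightarrow> indep I" using M unfolding matroid_def by blast
lemma augment: "indep I \<Longrightarrow> indep J \<Longrightarrow> card I < card J \<Longrightarrow> \<exists>x\<in>J - I. indep (insert x I)"
  using M unfolding matroid_def by blast

lemma rk_fin: "finite {card I | I. I \<subseteq> X \<and> indep I}"
proof -
  have "{card I | I. I \<subseteq> X \<and> indep I} \<subseteq> {..card S}"
    using indep_sub finS card_mono by fastforce
  then show ?thesis using finite_subset by blast
qed

lemma rk_ge: "I \<subseteq> X \<Longrightarrow> indep I \<Longrightarrow> card I \<le> rk indep X"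
  unfolding rk_def using rk_fin by (intro Max_ge) auto

lemma rk_obtain: "\<exists>I. I \<subseteq> X \<and> indep I \<and> card I = rk indep X"
proof -
  have "{card I | I. I \<subseteq> X \<and> indep I} \<noteq> {}" using indep_empty by blast
  from Max_in[OF rk_fin this] show ?thesis unfolding rk_def by auto
qed

lemma rk_mono: "X \<subseteq> Y \<Longrightarrow> rk indep X \<le> rk indep Y"
  using rk_obtain[of X] rk_ge[of _ Y] by force

lemma rk_empty: "rk indep {} = 0"
  using rk_obtain[of "{}"] by auto

lemma extend_aux: "\<forall>I. indep I \<and> I \<subseteq> X \<and> rk indep X - card I = n \<longrightarrow>
   (\<exists>J. I \<subseteq> J \<and> J \<subseteq> X \<and> indep J \<and> card J = rk indep X)"
proof (induction n)
  case 0
  show ?case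
  proof (intro allI impI)
    fix I assume a: "indep I \<and> I \<subseteq> X \<and> rk indep X - card I = 0"
    then have "card I \<le> rk indep X" using rk_ge by blast
    then have "card I = rk indep X" using a by linarith
    then show "\<exists>J. I \<subseteq> J \<and> J \<subseteq> X \<and> indep J \<and> card J = rk indep X" using a by blast
  qed
next
  case (Suc n)
  show ?case
  proof (intro allI impI)
    fix I assume a: "indep I \<and> I \<subseteq> X \<and> rk indep X - card I = Suc n"
    obtain J0 where J0: "J0 \<subseteq> X" "indep J0" "card J0 = rk indep X" using rk_obtain by blast
    have aI: "indep I" and aX: "I \<subseteq> X" and an: "rk indep X - card I = Suc n" using a by blast+
    have "card I < card J0" using an J0(3) by linarith
    then obtain x where x: "x \<in> J0 - I" "indep (insert x I)" using augment[OF aI J0(2)] by blast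
    have fI: "finite I" using indep_fin[OF aI] .
    have xI: "x \<notin> I" using x(1) by blast
    have c: "card (insert x I) = card I + 1" using card_insert_disjoint[OF fI xI] by simp
    have "insert x I \<subseteq> X" using aX x(1) J0(1) by blast
    moreover have "rk indep X - card (insert x I) = n" using c an by linarith
    ultimately have "indep (insert x I) \<and> insert x I \<subseteq> X \<and> rk indep X - card (insert x I) = n"
      using x(2) by blast
    then obtain J where J: "insert x I \<subseteq> J" "J \<subseteq> X" "indep J" "card J = rk indep X"
      using Suc.IH by blast
    then show "\<exists>J. I \<subseteq> J \<and> J \<subseteq> X \<and> indep J \<and> card J = rk indep X"
      by blast
  qed
qed

lemma extend: "indep I \<Longrightarrow> I \<subseteq> X \<Longrightarrow> \<exists>J. I \<subseteq> J \<and> J \<subseteq> X \<and> indep J \<and> card J = rk indep X"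
  using extend_aux[of X "rk indep X - card I"] by blast

lemma basis_card: "basis_restr indep T B \<longleftrightarrow> B \<subseteq> T \<and> indep B \<and> card B = rk indep T"
proof
  assume b: "basis_restr indep T B"
  then have B: "B \<subseteq> T" "indep B" unfolding basis_restr_def by auto
  have mx: "\<forall>x\<in>T - B. \<not> indep (insert x B)" using b unfolding basis_restr_def by blast
  obtain J where J: "B \<subseteq> J" "J \<subseteq> T" "indep J" "card J = rk indep T" using extend[OF B(2) B(1)] by blast
  have "\<not> card B < card J"
  proof
    assume "card B < card J"
    then obtain x where x: "x \<in> J - B" "indep (insert x B)" using augment[OF B(2) J(3)] by blast
    have "x \<in> T - B" using x(1) J(2) by blast
    then show False using mx x(2) by blast
  qed
  moreover have "card B \<le> rk indep T" using rk_ge[OF B(1) B(2)] .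
  ultimately have "card B = rk indep T" using J(4) by linarith
  then show "B \<subseteq> T \<and> indep B \<and> card B = rk indep T" using B by blast
next
  assume a: "B \<subseteq> T \<and> indep B \<and> card B = rk indep T"
  then have aT: "B \<subseteq> T" and aI: "indep B" and ac: "card B = rk indep T" by blast+
  show "basis_restr indep T B" unfolding basis_restr_def
  proof (intro conjI ballI)
    fix x assume x: "x \<in> T - B"
    show "\<not> indep (insert x B)"
    proof
      assume h: "indep (insert x B)"
      have "insert x B \<subseteq> T" using x aT by blast
      then have "card (insert x B) \<le> rk indep T" using rk_ge h by blast
      moreover have "x \<notin> B" using x by blast
      then have "card (insert x B) = card B + 1" using card_insert_disjoint[OF indep_fin[OF aI]] by simp
      ultimately show False using ac by linarith
    qed
  qed (use aT aI in blast)+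
qed

lemma keyK:
  assumes I: "indep I" "I \<subseteq> X" "card I = rk indep X" and e: "e \<notin> X"
  shows "rk indep (insert e X) > rk indep X \<longleftrightarrow> indep (insert e I)"
proof
  assume g: "rk indep (insert e X) > rk indep X"
  obtain J where J: "J \<subseteq> insert e X" "indep J" "card J = rk indep (insert e X)" using rk_obtain by blast
  have "card I < card J" using g I(3) J(3) by linarith
  then obtain x where x: "x \<in> J - I" "indep (insert x I)" using augment[OF I(1) J(2)] by blast
  have "x = e"
  proof (rule ccontr)
    assume "x \<noteq> e"
    then have "x \<in> X" using x J by blast
    then have "insert x I \<subseteq> X" using I(2) by blast
    then have "card (insert x I) \<le> rk indep X" using rk_ge x(2) by blast
    moreover have "x \<notin> I" using x by blast
    then have "card (insert x I) = card I + 1" using card_insert_disjoint[OF indep_fin[OF I(1)]] by simp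
    ultimately show False using I(3) by linarith
  qed
  then show "indep (insert e I)" using x by simp
next
  assume h: "indep (insert e I)"
  have "insert e I \<subseteq> insert e X" using I(2) by blast
  then have "card (insert e I) \<le> rk indep (insert e X)" using rk_ge h by blast
  moreover have "e \<notin> I" using e I by blast
  then have "card (insert e I) = card I + 1" using card_insert_disjoint[OF indep_fin[OF I(1)]] by simp
  ultimately show "rk indep (insert e X) > rk indep X" using I(3) by linarith
qed

lemma circuit_ex: "finite D \<Longrightarrow> \<not> indep D \<Longrightarrow> D \<subseteq> S \<Longrightarrow> \<exists>C\<subseteq>D. circuit S indep C"
proof (induction D rule: finite_psubset_induct)
  case (psubset D)
  show ?case
  proof (cases "\<forall>x\<in>D. indep (D - {x})")
    case True
    then show ?thesis using psubset unfolding circuit_def by blast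
  next
    case False
    then obtain x where "x \<in> D" "\<not> indep (D - {x})" by blast
    then have "D - {x} \<subset> D" by auto
    then show ?thesis using psubset.IH[of "D - {x}"] psubset.prems \<open>\<not> indep (D - {x})\<close> by blast
  qed
qed

end


lemma nat_chain:
  fixes f :: "nat \<Rightarrow> nat"
  assumes "f 0 = 0" "f r = r" "\<forall>i\<in>{1..r}. f (i - 1) < f i"
  shows "\<forall>i\<le>r. f i = i"
proof -
  have A: "i \<le> j \<Longrightarrow> j \<le> r \<Longrightarrow> f j \<ge> f i + (j - i)" for i j
  proof (induction j)
    case 0 then show ?case by simp
  next
    case (Suc j)
    show ?case
    proof (cases "i = Suc j")
      case False
      then have "f j \<ge> f i + (j - i)" using Suc by auto
      moreover have "Suc j \<in> {1..r}" using Suc.prems by auto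
      then have "f (Suc j - 1) < f (Suc j)" using assms(3) by blast
      then have "f j < f (Suc j)" by simp
      ultimately show ?thesis using False Suc.prems by linarith
    qed simp
  qed
  show ?thesis
  proof (intro allI impI)
    fix i assume "i \<le> r"
    then show "f i = i" using A[of 0 i] A[of i r] assms(1,2) by linarith
  qed
qed

locale L = mat +
  fixes Sc :: "nat \<Rightarrow> 'a set" and r :: nat
  assumes ll: "loopless S indep"
    and rS: "r = rk indep S"
    and U: "(\<Union>i\<in>{1..r}. Sc i) = S"
    and D: "\<forall>i\<in>{1..r}. \<forall>j\<in>{1..r}. i \<noteq> j \<longrightarrow> Sc i \<inter> Sc j = {}"
begin

definition T :: "nat \<Rightarrow> 'a set" where "T i = (\<Union>j\<in>{1..i}. Sc j)"

lemma T0: "T 0 = {}" unfolding T_def by auto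
lemma T_mem: "x \<in> T i \<longleftrightarrow> (\<exists>j\<in>{1..i}. x \<in> Sc j)" unfolding T_def by auto
lemma T_step: "i \<in> {1..r} \<Longrightarrow> T i = T (i - 1) \<union> Sc i"
proof -
  assume ir: "i \<in> {1..r}"
  then have "{1..i} = insert i {1..i-1}" by auto
  then show ?thesis unfolding T_def by auto
qed
lemma T_sub: "i \<le> r \<Longrightarrow> T i \<subseteq> S"
proof -
  assume "i \<le> r"
  then have "{1..i} \<subseteq> {1..r}" by auto
  then show ?thesis using U unfolding T_def by blast
qed
lemma T_r: "T r = S" using U unfolding T_def by simp
lemma T_mono: "i \<le> j \<Longrightarrow> T i \<subseteq> T j"
proof -
  assume "i \<le> j"
  then have "{1..i} \<subseteq> {1..j}" by auto
  then show ?thesis unfolding T_def by blast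
qed
lemma Sc_sub: "i \<in> {1..r} \<Longrightarrow> Sc i \<subseteq> T i" unfolding T_def by auto
lemma disj: "i \<in> {1..r} \<Longrightarrow> k < i \<Longrightarrow> Sc i \<inter> T k = {}"
proof -
  assume ir: "i \<in> {1..r}" and k: "k < i"
  show ?thesis
  proof (rule ccontr)
    assume "Sc i \<inter> T k \<noteq> {}"
    then obtain x j where "x \<in> Sc i" "j \<in> {1..k}" "x \<in> Sc j" unfolding T_def by blast
    moreover have "j \<in> {1..r}" "j \<noteq> i" using \<open>j \<in> {1..k}\<close> k ir by auto
    ultimately show False using D ir by blast
  qed
qed

definition H where "H \<longleftrightarrow> (\<forall>i\<in>{1..r}. \<forall>e\<in>Sc i. rk indep (insert e (T (i - 1))) > rk indep (T (i - 1)))"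
definition ranks where "ranks \<longleftrightarrow> (\<forall>i\<in>{1..r}. rk indep (T i) = i)"

lemma ranks_le: "ranks \<Longrightarrow> i \<le> r \<Longrightarrow> rk indep (T i) = i"
  unfolding ranks_def using T0 rk_empty by (cases "i = 0") auto

lemma RCF: assumes H shows "rainbow_circuit_free S indep r Sc"
  unfolding rainbow_circuit_free_def
proof
  assume "\<exists>C. circuit S indep C \<and> (\<forall>i\<in>{1..r}. card (C \<inter> Sc i) \<le> 1)"
  then obtain C where C: "circuit S indep C" and rb: "\<forall>i\<in>{1..r}. card (C \<inter> Sc i) \<le> 1" by blast
  have CS: "C \<subseteq> S" and Cd: "\<not> indep C" and Cm: "\<forall>x\<in>C. indep (C - {x})" using C unfolding circuit_def by auto
  have "C \<noteq> {}" using Cd indep_empty by auto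
  then obtain c where "c \<in> C" by blast
  define J where "J = {j\<in>{1..r}. C \<inter> Sc j \<noteq> {}}"
  have "J \<noteq> {}" using \<open>c \<in> C\<close> CS U unfolding J_def by blast
  have fJ: "finite J" unfolding J_def by auto
  define i where "i = Max J"
  have iJ: "i \<in> J" using Max_in[OF fJ \<open>J \<noteq> {}\<close>] i_def by simp
  then have ir: "i \<in> {1..r}" unfolding J_def by auto
  obtain e where e: "e \<in> C \<inter> Sc i" using iJ unfolding J_def by auto
  have fC: "finite C" using CS finS finite_subset by blast
  have eonly: "y \<in> C \<inter> Sc i \<Longrightarrow> y = e" for y
  proof (rule ccontr)
    assume "y \<in> C \<inter> Sc i" "y \<noteq> e"
    then have "card {e, y} \<le> card (C \<inter> Sc i)" using e fC by (intro card_mono) auto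
    moreover have "card (C \<inter> Sc i) \<le> 1" using rb ir by blast
    moreover have "card {e, y} = 2" using \<open>y \<noteq> e\<close> by auto
    ultimately show False by linarith
  qed
  have sub: "C - {e} \<subseteq> T (i - 1)"
  proof
    fix y assume y: "y \<in> C - {e}"
    then obtain j where j: "j \<in> {1..r}" "y \<in> Sc j" using CS U by blast
    then have "j \<in> J" using y unfolding J_def by auto
    then have "j \<le> i" using fJ i_def by simp
    moreover have "j \<noteq> i" using eonly y j by auto
    ultimately show "y \<in> T (i - 1)" using j unfolding T_mem by auto
  qed
  have ind: "indep (C - {e})" using Cm e by auto
  obtain I where I: "C - {e} \<subseteq> I" "I \<subseteq> T (i - 1)" "indep I" "card I = rk indep (T (i - 1))"
    using extend[OF ind sub] by blast
  have enot: "e \<notin> T (i - 1)" using disj[OF ir, of "i - 1"] e ir by auto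
  have "indep (insert e I)" using keyK[OF I(3) I(2) I(4) enot] \<open>H\<close> e ir unfolding H_def by auto
  moreover have "C \<subseteq> insert e I" using I by auto
  ultimately show False using indep_mono Cd by blast
qed

lemma CUT: assumes H ranks shows "\<forall>i\<in>{1..r}. is_cut_restr indep (T i) (Sc i)"
proof
  fix i assume ir: "i \<in> {1..r}"
  have rki: "rk indep (T i) = i" using ranks_le[OF \<open>ranks\<close>] ir by auto
  have rki1: "rk indep (T (i - 1)) = i - 1" using ranks_le[OF \<open>ranks\<close>] ir by auto
  show "is_cut_restr indep (T i) (Sc i)" unfolding is_cut_restr_def
  proof (intro conjI allI impI)
    show "Sc i \<subseteq> T i" using Sc_sub ir .
  next
    fix B assume "basis_restr indep (T i) B"
    then have B: "B \<subseteq> T i" "indep B" "card B = i" using basis_card rki by auto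
    show "Sc i \<inter> B \<noteq> {}"
    proof
      assume "Sc i \<inter> B = {}"
      then have "B \<subseteq> T (i - 1)" using B T_step[OF ir] by auto
      then have "card B \<le> i - 1" using rk_ge[of B "T (i - 1)"] B(2) rki1 by simp
      then show False using B ir by auto
    qed
  next
    fix Y assume Y: "Y \<subset> Sc i"
    then obtain y where y: "y \<in> Sc i" "y \<notin> Y" by blast
    obtain I where I: "I \<subseteq> T (i - 1)" "indep I" "card I = rk indep (T (i - 1))"
      using extend[OF indep_empty] by blast
    have ynot: "y \<notin> T (i - 1)" using disj[OF ir, of "i - 1"] y ir by auto
    have ins: "indep (insert y I)" using keyK[OF I(2) I(1) I(3) ynot] \<open>H\<close> y ir unfolding H_def by auto
    have "card (insert y I) = i" using I ynot indep_fin rki1 ir by (subst card_insert_disjoint) auto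
    moreover have "insert y I \<subseteq> T i" using I y T_step[OF ir] by auto
    ultimately have "basis_restr indep (T i) (insert y I)" using basis_card ins rki by auto
    moreover have "Y \<inter> insert y I = {}" using y I Y disj[OF ir, of "i - 1"] ir by auto
    ultimately show "\<exists>B. basis_restr indep (T i) B \<and> Y \<inter> B = {}" by blast
  qed
qed

lemma A: assumes "\<forall>i\<in>{1..r}. is_cut_restr indep (T i) (Sc i)" shows "H \<and> ranks"
proof -
  have step: "rk indep (T i) = rk indep (T (i - 1)) + 1 \<and>
     (\<forall>e\<in>Sc i. rk indep (insert e (T (i - 1))) > rk indep (T (i - 1)))" if ir: "i \<in> {1..r}" for i
  proof -
    have cut: "is_cut_restr indep (T i) (Sc i)" using assms ir by auto
    obtain I where I: "I \<subseteq> T (i - 1)" "indep I" "card I = rk indep (T (i - 1))"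
      using extend[OF indep_empty] by blast
    have hit: "\<forall>B. basis_restr indep (T i) B \<longrightarrow> Sc i \<inter> B \<noteq> {}"
      using cut unfolding is_cut_restr_def by blast
    have "Sc i \<inter> I = {}" using disj[OF ir, of "i - 1"] I(1) ir by auto
    then have "\<not> basis_restr indep (T i) I" using hit by blast
    moreover have "I \<subseteq> T i" using I T_mono[of "i - 1" i] by auto
    ultimately obtain x where x: "x \<in> T i - I" "indep (insert x I)" unfolding basis_restr_def using I by auto
    have ITi: "I \<subseteq> T i" using I T_mono[of "i - 1" i] by auto
    have "card (insert x I) = card I + 1" using x indep_fin I by auto
    then have gt: "rk indep (T i) \<ge> rk indep (T (i - 1)) + 1" using rk_ge[of "insert x I" "T i"] x I ITi by auto
    have "Sc i \<noteq> {}"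
    proof
      assume "Sc i = {}"
      obtain B where "B \<subseteq> T i" "indep B" "card B = rk indep (T i)" using rk_obtain by blast
      then have "basis_restr indep (T i) B" using basis_card by auto
      then show False using cut \<open>Sc i = {}\<close> unfolding is_cut_restr_def by auto
    qed
    then obtain e0 where "e0 \<in> Sc i" by blast
    have eB: "\<exists>B. basis_restr indep (T i) B \<and> B \<subseteq> insert e (T (i - 1)) \<and> e \<in> B" if e: "e \<in> Sc i" for e
    proof -
      have ps: "Sc i - {e} \<subset> Sc i" using e by blast
      have "\<forall>Y. Y \<subset> Sc i \<longrightarrow> (\<exists>B. basis_restr indep (T i) B \<and> Y \<inter> B = {})"
        using cut unfolding is_cut_restr_def by blast
      then obtain B where B: "basis_restr indep (T i) B" "(Sc i - {e}) \<inter> B = {}"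
        using ps by blast
      have "Sc i \<inter> B \<noteq> {}" using cut B unfolding is_cut_restr_def by auto
      then have "e \<in> B" using B by auto
      moreover have "B \<subseteq> insert e (T (i - 1))" using B T_step[OF ir] unfolding basis_restr_def by auto
      ultimately show ?thesis using B by blast
    qed
    obtain B0 where B0: "basis_restr indep (T i) B0" "B0 \<subseteq> insert e0 (T (i - 1))" "e0 \<in> B0"
      using eB \<open>e0 \<in> Sc i\<close> by blast
    have B0c: "card B0 = rk indep (T i)" "indep B0" using B0 basis_card by auto
    have "indep (B0 - {e0})" using B0c indep_mono by blast
    moreover have "B0 - {e0} \<subseteq> T (i - 1)" using B0 by auto
    ultimately have "card (B0 - {e0}) \<le> rk indep (T (i - 1))" using rk_ge by blast
    moreover have "card (B0 - {e0}) = card B0 - 1" using B0 by auto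
    moreover have "card B0 \<ge> 1"
    proof -
      have fB0: "finite B0" using indep_fin B0c(2) by blast
      have "card B0 \<noteq> 0" using card_0_eq[OF fB0] B0(3) by auto
      then show ?thesis by linarith
    qed
    ultimately have eq: "rk indep (T i) = rk indep (T (i - 1)) + 1" using gt B0c by linarith
    have "\<forall>e\<in>Sc i. rk indep (insert e (T (i - 1))) > rk indep (T (i - 1))"
    proof
      fix e assume "e \<in> Sc i"
      then obtain B where B: "basis_restr indep (T i) B" "B \<subseteq> insert e (T (i - 1))" using eB by blast
      then have "card B = rk indep (T i)" "indep B" using basis_card by auto
      then have "rk indep (insert e (T (i - 1))) \<ge> rk indep (T i)" using rk_ge[of B "insert e (T (i - 1))"] B by simp
      then show "rk indep (insert e (T (i - 1))) > rk indep (T (i - 1))" using eq by auto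
    qed
    then show ?thesis using eq by blast
  qed
  have "H" unfolding H_def using step by blast
  moreover have "\<forall>i\<le>r. rk indep (T i) = i"
    using nat_chain[of "\<lambda>i. rk indep (T i)" r] step T0 rk_empty T_r rS by auto
  ultimately show ?thesis unfolding ranks_def by auto
qed

lemma C: assumes "\<forall>i\<in>{1..r}. Sc i \<noteq> {} \<and> closed_set S indep (T i)" shows "H \<and> ranks"
proof -
  have h: "rk indep (insert e (T (i - 1))) > rk indep (T (i - 1))" if ir: "i \<in> {1..r}" and e: "e \<in> Sc i" for i e
  proof (cases "i = 1")
    case True
    have "e \<in> S" using e ir U by blast
    then have "indep {e}" using ll unfolding loopless_def by auto
    then have "rk indep {e} \<ge> 1" using rk_ge[of "{e}" "{e}"] by auto
    then show ?thesis using True T0 rk_empty by auto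
  next
    case False
    then have "i - 1 \<in> {1..r}" using ir by auto
    then have "closed_set S indep (T (i - 1))" using assms by blast
    moreover have "e \<in> S - T (i - 1)" using e ir U disj[OF ir, of "i - 1"] by auto
    ultimately show ?thesis unfolding closed_set_def by blast
  qed
  have "H" unfolding H_def using h by blast
  moreover have "rk indep (T i) > rk indep (T (i - 1))" if ir: "i \<in> {1..r}" for i
  proof -
    obtain e where e: "e \<in> Sc i" using assms ir by blast
    have "insert e (T (i - 1)) \<subseteq> T i" using T_step[OF ir] e by auto
    then show ?thesis using h[OF ir e] rk_mono[of "insert e (T (i - 1))" "T i"] by linarith
  qed
  then have "\<forall>i\<le>r. rk indep (T i) = i"
    using nat_chain[of "\<lambda>i. rk indep (T i)" r] T0 rk_empty T_r rS by auto
  ultimately show ?thesis unfolding ranks_def by auto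
qed

lemma B: assumes "rainbow_circuit_free S indep r Sc" ranks
  shows "\<forall>i\<in>{1..r}. Sc i \<noteq> {} \<and> closed_set S indep (T i)"
proof -
  have rb: "i \<le> r \<Longrightarrow> \<exists>I. I \<subseteq> T i \<and> indep I \<and> card I = i \<and> (\<forall>j\<in>{1..r}. card (I \<inter> Sc j) \<le> 1)" for i
  proof (induction i)
    case 0 then show ?case using indep_empty T0 by auto
  next
    case (Suc i)
    then obtain I where I: "I \<subseteq> T i" "indep I" "card I = i" "\<forall>j\<in>{1..r}. card (I \<inter> Sc j) \<le> 1" by auto
    have ir: "Suc i \<in> {1..r}" using Suc by auto
    obtain J where J: "J \<subseteq> T (Suc i)" "indep J" "card J = Suc i"
      using rk_obtain[of "T (Suc i)"] ranks_le[OF \<open>ranks\<close> Suc.prems] by auto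
    obtain x where x: "x \<in> J - I" "indep (insert x I)" using augment[of I J] I J by auto
    have ci: "card (insert x I) = Suc i" using x I indep_fin by auto
    have "x \<notin> T i"
    proof
      assume "x \<in> T i"
      then have "card (insert x I) \<le> rk indep (T i)" using rk_ge x I by auto
      then show False using ci ranks_le[OF \<open>ranks\<close>, of i] Suc.prems by auto
    qed
    then have xS: "x \<in> Sc (Suc i)" using x J T_step[OF ir] by auto
    have "\<forall>j\<in>{1..r}. card (insert x I \<inter> Sc j) \<le> 1"
    proof
      fix j assume jr: "j \<in> {1..r}"
      show "card (insert x I \<inter> Sc j) \<le> 1"
      proof (cases "j = Suc i")
        case True
        have "I \<inter> Sc j = {}" using disj[OF ir, of i] I True by auto
        then have "insert x I \<inter> Sc j \<subseteq> {x}" by auto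
        then have "card (insert x I \<inter> Sc j) \<le> card {x}" by (intro card_mono) auto
        then show ?thesis by simp
      next
        case False
        then have "x \<notin> Sc j" using D jr ir xS by blast
        then show ?thesis using I jr by auto
      qed
    qed
    moreover have "insert x I \<subseteq> T (Suc i)" using I x J T_mono[of i "Suc i"] by auto
    ultimately show ?case using x ci by blast
  qed
  show ?thesis
  proof
    fix i assume ir: "i \<in> {1..r}"
    have "Sc i \<noteq> {}"
    proof
      assume "Sc i = {}"
      then have "T i = T (i - 1)" using T_step[OF ir] by auto
      moreover have "rk indep (T i) = i" using ranks_le[OF \<open>ranks\<close>, of i] ir by auto
      moreover have "rk indep (T (i - 1)) = i - 1" using ranks_le[OF \<open>ranks\<close>, of "i - 1"] ir by auto
      ultimately show False using ir by auto
    qed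
    moreover have "closed_set S indep (T i)" unfolding closed_set_def
    proof (intro conjI ballI)
      show "T i \<subseteq> S" using T_sub ir by auto
    next
      fix e assume e: "e \<in> S - T i"
      obtain I where I: "I \<subseteq> T i" "indep I" "card I = i" "\<forall>j\<in>{1..r}. card (I \<inter> Sc j) \<le> 1"
        using rb ir by auto
      have I': "card I = rk indep (T i)" using I ranks_le[OF \<open>ranks\<close>] ir by auto
      obtain k where k: "k \<in> {1..r}" "e \<in> Sc k" using e U by blast
      have "k > i"
      proof (rule ccontr)
        assume "\<not> k > i"
        then have "e \<in> T i" using k unfolding T_mem by auto
        then show False using e by blast
      qed
      show "rk indep (T i) < rk indep (insert e (T i))"
      proof (rule ccontr)
        assume "\<not> ?thesis"
        then have nd: "\<not> indep (insert e I)" using keyK[OF I(2) I(1) I' ] e by blast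
        have "finite (insert e I)" using I indep_fin by auto
        moreover have "insert e I \<subseteq> S" using I T_sub ir e by auto
        ultimately obtain Cc where Cc: "Cc \<subseteq> insert e I" "circuit S indep Cc" using circuit_ex nd by blast
        have "\<forall>j\<in>{1..r}. card (Cc \<inter> Sc j) \<le> 1"
        proof
          fix j assume jr: "j \<in> {1..r}"
          have fin: "finite (insert e I \<inter> Sc j)" using \<open>finite (insert e I)\<close> by auto
          have "card (insert e I \<inter> Sc j) \<le> 1"
          proof (cases "j = k")
            case True
            have "I \<inter> Sc j = {}" using disj[OF k(1), of i] I True \<open>k > i\<close> by auto
            then have "insert e I \<inter> Sc j \<subseteq> {e}" by auto
            then have "card (insert e I \<inter> Sc j) \<le> card {e}" by (intro card_mono) auto
            then show ?thesis by simp
          next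
            case False
            then have "e \<notin> Sc j" using D jr k by blast
            then show ?thesis using I jr by auto
          qed
          moreover have "card (Cc \<inter> Sc j) \<le> card (insert e I \<inter> Sc j)" using Cc fin by (intro card_mono) auto
          ultimately show "card (Cc \<inter> Sc j) \<le> 1" by linarith
        qed
        then show False using assms(1) Cc unfolding rainbow_circuit_free_def by blast
      qed
    qed
    ultimately show "Sc i \<noteq> {} \<and> closed_set S indep (T i)" by blast
  qed
qed

lemma main:
  "((\<forall>i\<in>{1..r}. is_cut_restr indep (T i) (Sc i))
          \<longleftrightarrow> (rainbow_circuit_free S indep r Sc \<and> ranks))
       \<and> ((rainbow_circuit_free S indep r Sc \<and> ranks)
          \<longleftrightarrow> (\<forall>i\<in>{1..r}. Sc i \<noteq> {} \<and> closed_set S indep (T i)))"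
  using A B C CUT RCF by blast

end

theorem lemma13:
  fixes S :: "'a set" and indep :: "'a set \<Rightarrow> bool" and Sc :: "nat \<Rightarrow> 'a set" and r :: nat
  assumes "matroid S indep"
    and "loopless S indep"
    and "r = rk indep S"
    and "(\<Union>i\<in>{1..r}. Sc i) = S"
    and "\<forall>i\<in>{1..r}. \<forall>j\<in>{1..r}. i \<noteq> j \<longrightarrow> Sc i \<inter> Sc j = {}"
  shows "((\<forall>i\<in>{1..r}. is_cut_restr indep (\<Union>j\<in>{1..i}. Sc j) (Sc i))
          \<longleftrightarrow> (rainbow_circuit_free S indep r Sc \<and>
               (\<forall>i\<in>{1..r}. rk indep (\<Union>j\<in>{1..i}. Sc j) = i)))
       \<and> ((rainbow_circuit_free S indep r Sc \<and>
               (\<forall>i\<in>{1..r}. rk indep (\<Union>j\<in>{1..i}. Sc j) = i))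
          \<longleftrightarrow> (\<forall>i\<in>{1..r}. Sc i \<noteq> {} \<and> closed_set S indep (\<Union>j\<in>{1..i}. Sc j)))"
  proof -
  interpret L S indep Sc r
  proof (rule L.intro)
    show "mat S indep" by (rule mat.intro) (rule assms(1))
    show "L_axioms S indep Sc r" by (rule L_axioms.intro) (rule assms)+
  qed
  have e1: "T = (\<lambda>i. \<Union>j\<in>{1..i}. Sc j)" by (rule ext) (simp add: T_def)
  have m: "((\<forall>i\<in>{1..r}. is_cut_restr indep (T i) (Sc i))
          \<longleftrightarrow> (rainbow_circuit_free S indep r Sc \<and> (\<forall>i\<in>{1..r}. rk indep (T i) = i)))
       \<and> ((rainbow_circuit_free S indep r Sc \<and> (\<forall>i\<in>{1..r}. rk indep (T i) = i))
          \<longleftrightarrow> (\<forall>i\<in>{1..r}. Sc i \<noteq> {} \<and> closed_set S indep (T i)))"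
    using main unfolding ranks_def .
  show ?thesis using m unfolding e1 .
qed

end
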